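(* Let $U$ be a finite word over the alphabet $\{\mathtt{a},\mathtt{b},\mathtt{x}\}$ starting and ending with the letter $\mathtt{x}$, and let $\alpha=r(U)^{1/(|U|+5)}$. Then there exists a constant $c>0$ such that $f_4(n)\geqslant c\,\alpha^n$ for all $n\in\mathbb{N}$.
   Context: A square is a finite non-empty word of the form $XX$; a word is square-free if it has no square factor. A square reduction replaces a word $UXXV$ (with $X$ non-empty) by $UXV$. A reduct of $W$ is any square-free word obtainable from $W$ by a finite sequence of square reductions, and $r(W)$ is the number of distinct reducts of $W$. $|U|$ is the length of $U$. For integers $k,n\geqslant 1$, $f_k(n)$ is the maximum of $r(W)$ over all words $W$ of length $n$ over a $k$-letter alphabet. *)

theory Defs
  imports Complex_Main
begin

text \<open>Words are lists. A k-letter alphabet is modelled as the letters 0..<k (nat);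
  all notions below are invariant under renaming letters.\<close>

definition square_free :: "'a list \<Rightarrow> bool" where
  "square_free w \<longleftrightarrow> \<not> (\<exists>u x v. x \<noteq> [] \<and> w = u @ x @ x @ v)"

definition square_reduction :: "'a list \<Rightarrow> 'a list \<Rightarrow> bool" where
  "square_reduction W W' \<longleftrightarrow> (\<exists>u x v. x \<noteq> [] \<and> W = u @ x @ x @ v \<and> W' = u @ x @ v)"

definition reducts :: "'a list \<Rightarrow> 'a list set" where
  "reducts W = {W'. square_reduction\<^sup>*\<^sup>* W W' \<and> square_free W'}"

definition r :: "'a list \<Rightarrow> nat" where
  "r W = card (reducts W)"

definition f :: "nat \<Rightarrow> nat \<Rightarrow> nat" where
  "f k n = Max {r W | W :: nat list. length W = n \<and> set W \<subseteq> {0..<k}}"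

end

theory Submission
  imports Defs
begin


lemma sr_step_props:
  assumes "square_reduction W W'"
  shows "length W' < length W \<and> set W' \<subseteq> set W \<and> W' \<noteq> [] \<and> hd W' = hd W \<and> last W' = last W"
proof -
  obtain u x v where x: "x \<noteq> []" "W = u @ x @ x @ v" "W' = u @ x @ v"
    using assms unfolding square_reduction_def by blast
  show ?thesis using x by (cases u; cases v; auto)
qed

lemma sr_props:
  assumes "square_reduction\<^sup>*\<^sup>* W W'" "W \<noteq> []"
  shows "length W' \<le> length W \<and> set W' \<subseteq> set W \<and> W' \<noteq> [] \<and> hd W' = hd W \<and> last W' = last W"
  using assms(1)
proof (induction rule: rtranclp_induct)
  case base then show ?case using assms(2) by simp
next
  case (step y z) then show ?case using sr_step_props[OF step(2)] by auto
qed

lemma sr_props0: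
  assumes "square_reduction\<^sup>*\<^sup>* W W'"
  shows "length W' \<le> length W \<and> set W' \<subseteq> set W"
  using assms
proof (induction rule: rtranclp_induct)
  case base then show ?case by simp
next
  case (step y z) then show ?case using sr_step_props[OF step(2)] by auto
qed

lemma sr_cong:
  assumes "square_reduction\<^sup>*\<^sup>* a b"
  shows "square_reduction\<^sup>*\<^sup>* (p @ a @ q) (p @ b @ q)"
  using assms
proof (induction rule: rtranclp_induct)
  case base then show ?case by simp
next
  case (step y z)
  obtain u x v where x: "x \<noteq> []" "y = u @ x @ x @ v" "z = u @ x @ v"
    using step(2) unfolding square_reduction_def by blast
  have "square_reduction (p @ y @ q) (p @ z @ q)"
    unfolding square_reduction_def using x
    by (rule_tac x="p @ u" in exI, rule_tac x=x in exI, rule_tac x="v @ q" in exI) simp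
  then show ?case using step(3) by (meson rtranclp.rtrancl_into_rtrancl)
qed

lemma exists_reduct: "\<exists>W'. square_reduction\<^sup>*\<^sup>* W W' \<and> square_free W'"
proof (induction "length W" arbitrary: W rule: less_induct)
  case less
  show ?case
  proof (cases "square_free W")
    case True then show ?thesis by blast
  next
    case False
    then obtain u x v where x: "x \<noteq> []" "W = u @ x @ x @ v" unfolding square_free_def by blast
    have st: "square_reduction W (u @ x @ v)" unfolding square_reduction_def using x by blast
    have "length (u @ x @ v) < length W" using x by simp
    then obtain W' where "square_reduction\<^sup>*\<^sup>* (u @ x @ v) W'" "square_free W'" using less by blast
    then show ?thesis using st by (meson converse_rtranclp_into_rtranclp)
  qed
qed

lemma reducts_finite: "finite (reducts W)"
proof -
  have "reducts W \<subseteq> {w. set w \<subseteq> set W \<and> length w \<le> length W}"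
    unfolding reducts_def using sr_props0 by blast
  then show ?thesis using finite_lists_length_le[of "set W" "length W"] finite_subset by blast
qed

lemma r_pos: "r W \<ge> 1"
proof -
  have "reducts W \<noteq> {}" using exists_reduct[of W] unfolding reducts_def by blast
  then show ?thesis unfolding r_def using reducts_finite[of W]
    by (simp add: Suc_le_eq card_gt_0_iff)
qed

lemma f_ge:
  assumes "length W = n" "set W \<subseteq> {0..<k}"
  shows "r W \<le> f k n"
proof -
  have fin: "finite {r W | W :: nat list. length W = n \<and> set W \<subseteq> {0..<k}}"
  proof -
    have "{r W | W :: nat list. length W = n \<and> set W \<subseteq> {0..<k}} = r ` {W. set W \<subseteq> {0..<k} \<and> length W = n}"
      by blast
    then show ?thesis using finite_lists_length_eq[of "{0..<k}" n] by simp
  qed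
  show ?thesis unfolding f_def using assms by (intro Max_ge[OF fin]) blast
qed

lemma sq_free_append: "square_free (a @ b) \<Longrightarrow> square_free a \<and> square_free b"
  unfolding square_free_def by (metis append.assoc)

lemma sq_free_iff:
  "square_free w \<longleftrightarrow> (\<forall>i \<in> set [0..<length w]. \<forall>l \<in> set [1..<Suc (length w)].
     i + 2*l \<le> length w \<longrightarrow> take l (drop i w) \<noteq> take l (drop (i+l) w))"
proof
  assume sf: "square_free w"
  show "(\<forall>i \<in> set [0..<length w]. \<forall>l \<in> set [1..<Suc (length w)].
     i + 2*l \<le> length w \<longrightarrow> take l (drop i w) \<noteq> take l (drop (i+l) w))"
  proof (intro ballI impI notI)
    fix i l assume "i \<in> set [0..<length w]" "l \<in> set [1..<Suc (length w)]" "i + 2*l \<le> length w"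
      and eq: "take l (drop i w) = take l (drop (i+l) w)"
    then have l: "l \<ge> 1" by auto
    have "w = take i w @ take l (drop i w) @ take l (drop (i+l) w) @ drop (i+2*l) w"
      using \<open>i + 2*l \<le> length w\<close>
      by (metis add.assoc append_take_drop_id drop_drop mult_2 add.commute)
    then have "w = take i w @ take l (drop i w) @ take l (drop i w) @ drop (i+2*l) w" using eq by simp
    moreover have "take l (drop i w) \<noteq> []" using l \<open>i + 2*l \<le> length w\<close> by simp
    ultimately show False using sf unfolding square_free_def by blast
  qed
next
  assume H: "(\<forall>i \<in> set [0..<length w]. \<forall>l \<in> set [1..<Suc (length w)].
     i + 2*l \<le> length w \<longrightarrow> take l (drop i w) \<noteq> take l (drop (i+l) w))"
  show "square_free w" unfolding square_free_def
  proof
    assume "\<exists>u x v. x \<noteq> [] \<and> w = u @ x @ x @ v"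
    then obtain u x v where x: "x \<noteq> []" "w = u @ x @ x @ v" by blast
    have "take (length x) (drop (length u) w) = x" using x by simp
    moreover have "take (length x) (drop (length u + length x) w) = x" using x by simp
    moreover have "length u \<in> set [0..<length w]" "length x \<in> set [1..<Suc (length w)]"
      "length u + 2 * length x \<le> length w" using x by (auto simp: Suc_le_eq)
    ultimately show False using H by metis
  qed
qed

lemma "square_free [2::nat,0,1,2,0,2]"
  by (simp add: sq_free_iff upt_rec)



abbreviation sep :: "nat list \<Rightarrow> nat list" where "sep t \<equiv> t @ [3]"

definition yfree :: "nat list list \<Rightarrow> bool" where
  "yfree ts \<longleftrightarrow> (\<forall>t\<in>set ts. 3 \<notin> set t)"

lemma L_sep: "3 \<notin> set t \<Longrightarrow> 3 \<notin> set g \<Longrightarrow> t @ 3 # R = g @ 3 # S \<Longrightarrow> t = g \<and> R = S"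
proof (induction t arbitrary: g)
  case Nil then show ?case by (cases g) auto
next
  case (Cons a t) then show ?case by (cases g) auto
qed

lemma conv2: "t @ R = u @ Y \<Longrightarrow> (\<exists>us. (t = u @ us \<and> us @ R = Y) \<or> (u = t @ us \<and> R = us @ Y))"
  using append_eq_append_conv2[of t R u Y] by metis

lemma D1:
  "yfree ts \<Longrightarrow> concat (map sep ts) = Z @ 3 # R \<Longrightarrow>
   \<exists>pre post. ts = pre @ post \<and> concat (map sep pre) = Z @ [3] \<and> concat (map sep post) = R"
proof (induction ts arbitrary: Z)
  case Nil then show ?case by simp
next
  case (Cons t ts)
  have t3: "3 \<notin> set t" and yts: "yfree ts" using Cons.prems(1) unfolding yfree_def by auto
  have "t @ (3 # concat (map sep ts)) = Z @ (3 # R)" using Cons.prems(2) by simp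
  from conv2[OF this] obtain us where
    "(t = Z @ us \<and> us @ 3 # concat (map sep ts) = 3 # R) \<or> (Z = t @ us \<and> 3 # concat (map sep ts) = us @ 3 # R)"
    by blast
  then show ?case
  proof
    assume a: "t = Z @ us \<and> us @ 3 # concat (map sep ts) = 3 # R"
    then have "us = []" using t3 by (cases us) auto
    then show ?thesis using a by (rule_tac x="[t]" in exI, rule_tac x=ts in exI) simp
  next
    assume a: "Z = t @ us \<and> 3 # concat (map sep ts) = us @ 3 # R"
    show ?thesis
    proof (cases us)
      case Nil then show ?thesis using a by (rule_tac x="[t]" in exI, rule_tac x=ts in exI) simp
    next
      case (Cons c us')
      then have "c = 3" "concat (map sep ts) = us' @ 3 # R" using a by auto
      from Cons.IH[OF yts this(2)] obtain pre post where
        "ts = pre @ post" "concat (map sep pre) = us' @ [3]" "concat (map sep post) = R" by blast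
      then show ?thesis using a Cons \<open>c = 3\<close>
        by (rule_tac x="t # pre" in exI, rule_tac x=post in exI) simp
    qed
  qed
qed

lemma last_concat_sep: "xs \<noteq> [] \<Longrightarrow> last (concat (map sep xs)) = 3"
  by (induction xs) auto

lemma D2:
  assumes "yfree pre" "concat (map sep pre) = W @ A @ [3]" "3 \<notin> set A"
  shows "pre \<noteq> [] \<and> (\<exists>Z. last pre = Z @ A)"
proof -
  have ne: "pre \<noteq> []" using assms(2) by auto
  then obtain K t where pk: "pre = K @ [t]" by (metis append_butlast_last_id)
  have t3: "3 \<notin> set t" using assms(1) pk unfolding yfree_def by auto
  have "concat (map sep K) @ t = W @ A" using assms(2) pk by simp
  from conv2[OF this] obtain us where
    "(concat (map sep K) = W @ us \<and> us @ t = A) \<or> (W = concat (map sep K) @ us \<and> t = us @ A)" by blast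
  then have "\<exists>Z. t = Z @ A"
  proof
    assume a: "concat (map sep K) = W @ us \<and> us @ t = A"
    show ?thesis
    proof (cases "us = []")
      case True then show ?thesis using a by auto
    next
      case False
      then have "K \<noteq> []" using a by auto
      then have "last (concat (map sep K)) = 3" by (rule last_concat_sep)
      then have "last us = 3" using a False by (metis last_appendR)
      then have "3 \<in> set A" using a False by (metis last_in_set Un_iff set_append)
      then show ?thesis using assms(3) by blast
    qed
  qed blast
  then show ?thesis using ne pk by simp
qed

lemma D3:
  "yfree ts2 \<Longrightarrow> yfree G \<Longrightarrow> 3 \<notin> set C \<Longrightarrow> concat (map sep ts2) = concat (map sep G) @ C @ v \<Longrightarrow>
   \<exists>rest. ts2 = G @ rest \<and> (C \<noteq> [] \<longrightarrow> rest \<noteq> [] \<and> (\<exists>Z. hd rest = C @ Z))"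
proof (induction G arbitrary: ts2)
  case Nil
  show ?case
  proof (cases "C = []")
    case True then show ?thesis by simp
  next
    case False
    then obtain t ts' where ts2: "ts2 = t # ts'" using Nil.prems(4) by (cases ts2) auto
    have "t @ (3 # concat (map sep ts')) = C @ v" using Nil.prems(4) ts2 by simp
    from conv2[OF this] obtain us where
      "(t = C @ us \<and> us @ 3 # concat (map sep ts') = v) \<or> (C = t @ us \<and> 3 # concat (map sep ts') = us @ v)"
      by blast
    then have "\<exists>Z. t = C @ Z"
    proof
      assume a: "C = t @ us \<and> 3 # concat (map sep ts') = us @ v"
      then have "us = []" using Nil.prems(3) by (cases us) auto
      then show ?thesis using a by simp
    qed blast
    then show ?thesis using ts2 by simp
  qed
next
  case (Cons g G)
  have g3: "3 \<notin> set g" and yG: "yfree G" using Cons.prems(2) unfolding yfree_def by auto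
  obtain t ts' where ts2: "ts2 = t # ts'" using Cons.prems(4) by (cases ts2) auto
  have t3: "3 \<notin> set t" and yts: "yfree ts'" using Cons.prems(1) ts2 unfolding yfree_def by auto
  have "t @ 3 # concat (map sep ts') = g @ 3 # (concat (map sep G) @ C @ v)"
    using Cons.prems(4) ts2 by simp
  from L_sep[OF t3 g3 this] have "t = g" "concat (map sep ts') = concat (map sep G) @ C @ v" by auto
  from Cons.IH[OF yts yG Cons.prems(3) this(2)] show ?case using ts2 \<open>t = g\<close> by auto
qed

lemma FL:
  "yfree ts \<Longrightarrow> 3 \<notin> set Y \<Longrightarrow> Y \<noteq> [] \<Longrightarrow> concat (map sep ts) = u @ Y @ v \<Longrightarrow>
   \<exists>t\<in>set ts. \<exists>a b. t = a @ Y @ b"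
proof (induction ts arbitrary: u)
  case Nil then show ?case by simp
next
  case (Cons t ts)
  have t3: "3 \<notin> set t" and yts: "yfree ts" using Cons.prems(1) unfolding yfree_def by auto
  have "t @ (3 # concat (map sep ts)) = u @ (Y @ v)" using Cons.prems(4) by simp
  from conv2[OF this] obtain us where
    "(t = u @ us \<and> us @ 3 # concat (map sep ts) = Y @ v) \<or> (u = t @ us \<and> 3 # concat (map sep ts) = us @ Y @ v)"
    by blast
  then show ?case
  proof
    assume a: "t = u @ us \<and> us @ 3 # concat (map sep ts) = Y @ v"
    then have "us @ (3 # concat (map sep ts)) = Y @ v" by simp
    from conv2[OF this] obtain ws where
      "(us = Y @ ws \<and> ws @ 3 # concat (map sep ts) = v) \<or> (Y = us @ ws \<and> 3 # concat (map sep ts) = ws @ v)"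
      by blast
    then have "\<exists>b. us = Y @ b"
    proof
      assume b: "Y = us @ ws \<and> 3 # concat (map sep ts) = ws @ v"
      then have "ws = []" using Cons.prems(2) by (cases ws) auto
      then show ?thesis using b by simp
    qed blast
    then show ?thesis using a by auto
  next
    assume a: "u = t @ us \<and> 3 # concat (map sep ts) = us @ Y @ v"
    show ?thesis
    proof (cases us)
      case Nil
      then have "Y = []" using a Cons.prems(2) by (cases Y) auto
      then show ?thesis using Cons.prems(3) by auto
    next
      case (Cons c us')
      then have "concat (map sep ts) = us' @ Y @ v" using a by auto
      from Cons.IH[OF yts \<open>3 \<notin> set Y\<close> Cons.prems(3) this] show ?thesis by auto
    qed
  qed
qed

lemma DC:
  assumes yts: "yfree ts" and eq: "concat (map sep ts) = u @ X @ X @ v" and x3: "3 \<in> set X"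
  shows "\<exists>pre G M rest C A. ts = pre @ G @ [M] @ G @ rest \<and> M = C @ A \<and>
     (A \<noteq> [] \<longrightarrow> pre \<noteq> [] \<and> (\<exists>Z. last pre = Z @ A)) \<and>
     (C \<noteq> [] \<longrightarrow> rest \<noteq> [] \<and> (\<exists>Z. hd rest = C @ Z))"
proof -
  obtain A B where X: "X = A @ 3 # B" and A3: "3 \<notin> set A" using x3 by (metis split_list_first)
  have "concat (map sep ts) = (u @ A) @ 3 # (B @ A @ 3 # B @ v)" using eq X by simp
  from D1[OF yts this] obtain pre post where
    p1: "ts = pre @ post" "concat (map sep pre) = (u @ A) @ [3]" "concat (map sep post) = B @ A @ 3 # B @ v"
    by blast
  have ypre: "yfree pre" and ypost: "yfree post" using yts p1(1) unfolding yfree_def by auto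
  have Acond: "A \<noteq> [] \<longrightarrow> pre \<noteq> [] \<and> (\<exists>Z. last pre = Z @ A)"
    using D2[OF ypre _ A3, of u] p1(2) by simp
  have "concat (map sep post) = (B @ A) @ 3 # (B @ v)" using p1(3) by simp
  from D1[OF ypost this] obtain mid post2 where
    p2: "post = mid @ post2" "concat (map sep mid) = (B @ A) @ [3]" "concat (map sep post2) = B @ v"
    by blast
  have ymid: "yfree mid" and ypost2: "yfree post2" using ypost p2(1) unfolding yfree_def by auto
  have "mid \<noteq> []" using p2(2) by auto
  then obtain G M where GM: "mid = G @ [M]" by (metis append_butlast_last_id)
  have M3: "3 \<notin> set M" and yG: "yfree G" using ymid GM unfolding yfree_def by auto
  have cm: "concat (map sep G) @ M = B @ A" using p2(2) GM by simp
  from conv2[OF cm] obtain us where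
    "(concat (map sep G) = B @ us \<and> us @ M = A) \<or> (B = concat (map sep G) @ us \<and> M = us @ A)" by blast
  then obtain C where MC: "M = C @ A" and BC: "B = concat (map sep G) @ C"
  proof
    assume a: "concat (map sep G) = B @ us \<and> us @ M = A"
    show thesis
    proof (cases "us = []")
      case True then show thesis using a that[of "[]"] by simp
    next
      case False
      then have "G \<noteq> []" using a by auto
      then have "last (concat (map sep G)) = 3" by (rule last_concat_sep)
      then have "last us = 3" using a False by (metis last_appendR)
      then have "3 \<in> set A" using a False by (metis last_in_set Un_iff set_append)
      then show thesis using A3 by blast
    qed
  next
    assume a: "B = concat (map sep G) @ us \<and> M = us @ A"
    then show thesis using that by blast
  qed
  have C3: "3 \<notin> set C" using M3 MC by simp
  have "concat (map sep post2) = concat (map sep G) @ C @ v" using p2(3) BC by simp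
  from D3[OF ypost2 yG C3 this] obtain rest where
    "post2 = G @ rest" "C \<noteq> [] \<longrightarrow> rest \<noteq> [] \<and> (\<exists>Z. hd rest = C @ Z)" by blast
  then show ?thesis using p1(1) p2(1) GM MC Acond
    by (rule_tac x=pre in exI, rule_tac x=G in exI, rule_tac x=M in exI, rule_tac x=rest in exI,
        rule_tac x=C in exI, rule_tac x=A in exI) simp
qed



definition Tset :: "nat list set" where "Tset = {[0,1,0],[1,0,1],[0,2,1],[1,2,0]}"

definition isT :: "nat list \<Rightarrow> bool" where "isT t \<longleftrightarrow> hd t \<noteq> 2"

definition good :: "nat list \<Rightarrow> bool" where
  "good t \<longleftrightarrow> t \<noteq> [] \<and> 3 \<notin> set t \<and> square_free t \<and> (if hd t = 2 then last t = 2 else t \<in> Tset)"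

fun altp :: "nat list list \<Rightarrow> bool" where
  "altp (a # b # rest) = (isT a \<noteq> isT b \<and> altp (b # rest))"
| "altp _ = True"

lemma altp_tl: "altp (x # l) \<Longrightarrow> altp l"
  by (cases l) auto

lemma altD: "altp (xs @ a # b # ys) \<Longrightarrow> isT a \<noteq> isT b"
proof (induction xs)
  case Nil then show ?case by simp
next
  case (Cons x xs) then show ?case using altp_tl by simp
qed

lemma T_len: "t \<in> Tset \<Longrightarrow> length t = 3"
  unfolding Tset_def by auto

lemma good_last: "good t \<Longrightarrow> isT t \<longleftrightarrow> last t \<noteq> 2"
  unfolding good_def isT_def Tset_def by (cases "hd t = 2") auto

lemma good_hd: "good t \<Longrightarrow> t \<noteq> [] \<and> 3 \<notin> set t \<and> square_free t"
  unfolding good_def by auto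

lemma good_T: "good t \<Longrightarrow> isT t \<Longrightarrow> t \<in> Tset"
  unfolding good_def isT_def by auto

lemma T_suffix: "M \<in> Tset \<Longrightarrow> P \<in> Tset \<Longrightarrow> P = Z @ M \<Longrightarrow> P = M"
  using T_len[of M] T_len[of P] by auto

lemma T_prefix: "M \<in> Tset \<Longrightarrow> Q \<in> Tset \<Longrightarrow> Q = M @ Z \<Longrightarrow> Q = M"
  using T_len[of M] T_len[of Q] by auto

lemma T_split0: "\<forall>M\<in>Tset. \<forall>P\<in>Tset. \<forall>Q\<in>Tset. (drop 1 P = drop 1 M \<and> take 1 Q = take 1 M \<longrightarrow> P = M \<or> Q = M)
   \<and> (drop 2 P = drop 2 M \<and> take 2 Q = take 2 M \<longrightarrow> P = M \<or> Q = M)"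
  unfolding Tset_def by simp

lemma T_split:
  assumes "M \<in> Tset" "P \<in> Tset" "Q \<in> Tset" "M = C @ A" "A \<noteq> []" "C \<noteq> []"
    "P = Z1 @ A" "Q = C @ Z2"
  shows "P = M \<or> Q = M"
proof -
  have l: "length C + length A = 3" using assms(1,4) T_len by fastforce
  have lP: "length P = 3" using T_len assms(2) by blast
  have "length A \<noteq> 0" "length C \<noteq> 0" using assms(5,6) by auto
  then have "length C = 1 \<or> length C = 2" using l by linarith
  then show ?thesis
  proof
    assume a: "length C = 1"
    have "drop 1 M = A" "take 1 M = C" using assms(4) a by auto
    moreover have "drop 1 P = A" using assms(7) lP l a
      by (metis append_eq_conv_conj diff_add_inverse2 length_append)
    moreover have "take 1 Q = C" using assms(8) a by simp
    ultimately show ?thesis using T_split0 assms(1,2,3) by metis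
  next
    assume a: "length C = 2"
    have "drop 2 M = A" "take 2 M = C" using assms(4) a by auto
    moreover have "drop 2 P = A" using assms(7) lP l a
      by (metis append_eq_conv_conj diff_add_inverse2 length_append)
    moreover have "take 2 Q = C" using assms(8) a by simp
    ultimately show ?thesis using T_split0 assms(1,2,3) by metis
  qed
qed

lemma filter_sq: "filter p ts = a @ X @ X @ b \<Longrightarrow> X \<noteq> [] \<Longrightarrow> \<not> square_free (filter p ts)"
  unfolding square_free_def by blast

theorem SF:
  assumes gd: "\<forall>t\<in>set ts. good t" and alt: "altp ts" and sfT: "square_free (filter isT ts)"
  shows "square_free (concat (map sep ts))"
proof -
  have yts: "yfree ts" using gd unfolding yfree_def good_def by auto
  show ?thesis unfolding square_free_def
  proof
    assume "\<exists>u X v. X \<noteq> [] \<and> concat (map sep ts) = u @ X @ X @ v"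
    then obtain u X v where X: "X \<noteq> []" "concat (map sep ts) = u @ X @ X @ v" by blast
    show False
    proof (cases "3 \<in> set X")
      case False
      have "concat (map sep ts) = u @ (X @ X) @ v" using X by simp
      from FL[OF yts _ _ this] obtain t a b where "t \<in> set ts" "t = a @ (X @ X) @ b"
        using False X(1) by auto
      then show False using gd X(1) unfolding good_def square_free_def by auto
    next
      case True
      from DC[OF yts X(2) True] obtain pre G M rest C A where
        D: "ts = pre @ G @ [M] @ G @ rest" "M = C @ A"
        "A \<noteq> [] \<longrightarrow> pre \<noteq> [] \<and> (\<exists>Z. last pre = Z @ A)"
        "C \<noteq> [] \<longrightarrow> rest \<noteq> [] \<and> (\<exists>Z. hd rest = C @ Z)" by blast
      have gM: "good M" using gd D(1) by auto
      have Mne: "M \<noteq> []" using gM good_hd by blast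
      have gP: "A \<noteq> [] \<Longrightarrow> good (last pre)" using gd D(1,3) by auto
      have gQ: "C \<noteq> [] \<Longrightarrow> good (hd rest)" using gd D(1,4) by auto
      have kP: "A \<noteq> [] \<Longrightarrow> isT (last pre) = isT M"
      proof -
        assume A: "A \<noteq> []"
        then obtain Z where "last pre = Z @ A" using D(3) by blast
        then have "last (last pre) = last M" using A D(2) by simp
        then show ?thesis using good_last[OF gP[OF A]] good_last[OF gM] by simp
      qed
      have kQ: "C \<noteq> [] \<Longrightarrow> isT (hd rest) = isT M"
      proof -
        assume C: "C \<noteq> []"
        then obtain Z where "hd rest = C @ Z" using D(4) by blast
        then have "hd (hd rest) = hd M" using C D(2) by simp
        then show ?thesis unfolding isT_def by simp
      qed
      show False
      proof (cases "isT M")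
        case False
        have Gne: "G \<noteq> []"
        proof
          assume G: "G = []"
          show False
          proof (cases "A = []")
            case False
            then have "pre \<noteq> []" using D(3) by blast
            then have "ts = butlast pre @ last pre # M # rest" using D(1) G by simp
            then have "isT (last pre) \<noteq> isT M" using alt altD by metis
            then show False using kP False by blast
          next
            case True
            then have "C \<noteq> []" using Mne D(2) by simp
            then have "rest \<noteq> []" using D(4) by blast
            then have "ts = pre @ M # hd rest # tl rest" using D(1) G by simp
            then have "isT M \<noteq> isT (hd rest)" using alt altD by metis
            then show False using kQ \<open>C \<noteq> []\<close> by simp
          qed
        qed
        then have "ts = (pre @ butlast G) @ last G # M # (G @ rest)" using D(1) by simp
        then have "isT (last G) \<noteq> isT M" using alt altD by metis
        then have "isT (last G)" using False by simp
        then have fne: "filter isT G \<noteq> []" using Gne by (metis filter_empty_conv last_in_set)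
        have "filter isT ts = filter isT pre @ filter isT G @ filter isT G @ filter isT rest"
          using D(1) False by simp
        then show False using filter_sq fne sfT by blast
      next
        case True
        have MT: "M \<in> Tset" using good_T[OF gM True] .
        have "(pre \<noteq> [] \<and> last pre = M) \<or> (rest \<noteq> [] \<and> hd rest = M)"
        proof (cases "A = []")
          case True
          then have C: "C \<noteq> []" "C = M" using Mne D(2) by auto
          then obtain Z where "rest \<noteq> []" "hd rest = M @ Z" using D(4) by blast
          moreover have "hd rest \<in> Tset" using good_T gQ kQ C \<open>isT M\<close> by blast
          ultimately show ?thesis using T_prefix MT by blast
        next
          case False
          then obtain Z1 where Z1: "pre \<noteq> []" "last pre = Z1 @ A" using D(3) by blast
          have PT: "last pre \<in> Tset" using good_T gP kP False \<open>isT M\<close> by blast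
          show ?thesis
          proof (cases "C = []")
            case True
            then have "last pre = Z1 @ M" using Z1 D(2) by simp
            then show ?thesis using T_suffix MT PT Z1 by blast
          next
            case Cne: False
            then obtain Z2 where Z2: "rest \<noteq> []" "hd rest = C @ Z2" using D(4) by blast
            have QT: "hd rest \<in> Tset" using good_T gQ kQ Cne \<open>isT M\<close> by blast
            from T_split[OF MT PT QT D(2) False Cne Z1(2) Z2(2)] show ?thesis using Z1 Z2 by blast
          qed
        qed
        then show False
        proof
          assume a: "pre \<noteq> [] \<and> last pre = M"
          then have "ts = butlast pre @ (M # G) @ (M # G) @ rest" using D(1)
            by (metis append.assoc append_Cons append_butlast_last_id append_Nil)
          then have "filter isT ts = filter isT (butlast pre) @ filter isT (M # G) @ filter isT (M # G) @ filter isT rest"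
            by simp
          moreover have "filter isT (M # G) \<noteq> []" using True by simp
          ultimately show False using filter_sq sfT by blast
        next
          assume a: "rest \<noteq> [] \<and> hd rest = M"
          then have "ts = pre @ (G @ [M]) @ (G @ [M]) @ tl rest" using D(1)
            by (metis append.assoc append_Cons append_Nil list.collapse)
          then have "filter isT ts = filter isT pre @ filter isT (G @ [M]) @ filter isT (G @ [M]) @ filter isT (tl rest)"
            by simp
          moreover have "filter isT (G @ [M]) \<noteq> []" using True by simp
          ultimately show False using filter_sq sfT by blast
        qed
      qed
    qed
  qed
qed



definition SF :: "nat \<Rightarrow> nat list set" where
  "SF k = {w. set w \<subseteq> {0..<4} \<and> length w = k \<and> square_free w}"

lemma SF_finite: "finite (SF k)"
proof -
  have "SF k \<subseteq> {w. set w \<subseteq> {0..<4} \<and> length w = k}" unfolding SF_def by blast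
  then show ?thesis using finite_lists_length_eq[of "{0..<4::nat}" k] finite_subset by blast
qed

lemma pow2_sum: "(\<Sum>i\<le>n. (2::nat)^i) + 1 = 2^Suc n"
  by (induction n) auto

lemma bad_mem:
  assumes w: "w \<in> SF n" and ns: "\<not> square_free (w @ [c])"
  shows "w @ [c] \<in> (\<Union>i\<in>{..n}. (\<lambda>z. z @ drop (2*i - Suc n) z) ` SF i)"
proof -
  obtain u X v where X: "X \<noteq> []" "w @ [c] = u @ X @ X @ v" using ns unfolding square_free_def by blast
  have v: "v = []"
  proof (rule ccontr)
    assume "v \<noteq> []"
    then have "w = u @ X @ X @ butlast v"
      using X(2) by (metis butlast_append butlast_snoc append_is_Nil_conv)
    then show False using w X(1) unfolding SF_def square_free_def by blast
  qed
  define i where "i = length u + length X"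
  have ln: "length w = n" using w unfolding SF_def by simp
  have len: "Suc n = length u + 2 * length X" using X(2) v ln
    by (metis length_append length_append_singleton add.assoc mult_2 append_Nil2)
  have iln: "i \<le> n" using len X(1) unfolding i_def by (cases X) auto
  have pre: "w @ [c] = (u @ X) @ X" using X(2) v by simp
  have zpre: "\<exists>t. w = (u @ X) @ t"
  proof -
    have "length (u @ X) \<le> length w" using iln ln unfolding i_def by simp
    then show ?thesis using pre by (metis append_eq_append_conv_if append_take_drop_id)
  qed
  then obtain t where t: "w = (u @ X) @ t" by blast
  have zSF: "u @ X \<in> SF i"
    using w t sq_free_append[of "u @ X" t] unfolding SF_def i_def by auto
  have "2*i - Suc n = length u" using len unfolding i_def by simp
  then have "w @ [c] = (\<lambda>z. z @ drop (2*i - Suc n) z) (u @ X)" using pre by simp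
  then show ?thesis using zSF iln by blast
qed

lemma SF_double:
  assumes IH: "\<forall>k\<le>n. card (SF k) * 2^(n-k) \<le> card (SF n)"
  shows "2 * card (SF n) \<le> card (SF (Suc n))"
proof -
  define E where "E = (\<lambda>(w,c). w @ [c]) ` (SF n \<times> {0..<4::nat})"
  define Bad where "Bad = (\<Union>i\<in>{..n}. (\<lambda>z. z @ drop (2*i - Suc n) z) ` SF i)"
  have injE: "inj_on (\<lambda>(w,c). w @ [c]) (SF n \<times> {0..<4::nat})"
    by (auto simp: inj_on_def)
  have cE: "card E = card (SF n) * 4"
    unfolding E_def using card_image[OF injE] by (simp add: card_cartesian_product)
  have sub: "E \<subseteq> SF (Suc n) \<union> Bad"
  proof
    fix e assume "e \<in> E"
    then obtain w c where wc: "w \<in> SF n" "c < 4" "e = w @ [c]" unfolding E_def by auto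
    show "e \<in> SF (Suc n) \<union> Bad"
    proof (cases "square_free (w @ [c])")
      case True then show ?thesis using wc unfolding SF_def by auto
    next
      case False then show ?thesis using bad_mem[OF wc(1) False] wc(3) unfolding Bad_def by blast
    qed
  qed
  have finB: "finite Bad" unfolding Bad_def using SF_finite by auto
  have "card E \<le> card (SF (Suc n) \<union> Bad)"
    using sub finB SF_finite by (intro card_mono) auto
  also have "\<dots> \<le> card (SF (Suc n)) + card Bad" by (rule card_Un_le)
  finally have c1: "card (SF n) * 4 \<le> card (SF (Suc n)) + card Bad" using cE by simp
  have "card Bad \<le> (\<Sum>i\<in>{..n}. card ((\<lambda>z. z @ drop (2*i - Suc n) z) ` SF i))"
    unfolding Bad_def by (rule card_UN_le) simp
  also have "\<dots> \<le> (\<Sum>i\<le>n. card (SF i))"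
    by (intro sum_mono card_image_le SF_finite)
  finally have cB: "card Bad \<le> (\<Sum>i\<le>n. card (SF i))" .
  have "(\<Sum>i\<le>n. card (SF i)) * 2^n = (\<Sum>i\<le>n. (card (SF i) * 2^(n-i)) * 2^i)"
    unfolding sum_distrib_right
    by (intro sum.cong refl) (simp add: mult.assoc power_add[symmetric])
  also have "\<dots> \<le> (\<Sum>i\<le>n. card (SF n) * 2^i)"
    using IH by (intro sum_mono mult_right_mono) auto
  also have "\<dots> = card (SF n) * (\<Sum>i\<le>n. 2^i)" by (simp add: sum_distrib_left)
  also have "\<dots> \<le> card (SF n) * 2^Suc n" using pow2_sum[of n] by simp
  finally have "(\<Sum>i\<le>n. card (SF i)) * 2^n \<le> (2 * card (SF n)) * 2^n" by simp
  then have "(\<Sum>i\<le>n. card (SF i)) \<le> 2 * card (SF n)" by simp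
  then show ?thesis using c1 cB by linarith
qed

lemma SF_grow: "\<forall>k\<le>n. card (SF k) * 2^(n-k) \<le> card (SF n)"
proof (induction n)
  case 0 then show ?case by simp
next
  case (Suc n)
  have d: "2 * card (SF n) \<le> card (SF (Suc n))" using SF_double[OF Suc.IH] .
  show ?case
  proof (intro allI impI)
    fix k assume k: "k \<le> Suc n"
    show "card (SF k) * 2 ^ (Suc n - k) \<le> card (SF (Suc n))"
    proof (cases "k = Suc n")
      case True then show ?thesis by simp
    next
      case False
      then have "k \<le> n" using k by simp
      then have "card (SF k) * 2 ^ (Suc n - k) = 2 * (card (SF k) * 2^(n-k))"
        by (simp add: Suc_diff_le)
      also have "\<dots> \<le> 2 * card (SF n)" using Suc.IH \<open>k \<le> n\<close> by simp
      finally show ?thesis using d by simp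
    qed
  qed
qed

lemma SF_nonempty: "\<exists>s::nat list. set s \<subseteq> {0..<4} \<and> length s = N \<and> square_free s"
proof -
  have "SF 0 = {[]}" unfolding SF_def square_free_def by auto
  then have "card (SF 0) * 2^N \<le> card (SF N)" using SF_grow[of N] by fastforce
  moreover have "card (SF 0) = 1" using \<open>SF 0 = {[]}\<close> by simp
  ultimately have "2^N \<le> card (SF N)" by simp
  then have "card (SF N) > 0" using less_le_trans[of 0 "2^N" "card (SF N)"] by simp
  then have "SF N \<noteq> {}" by auto
  then show ?thesis unfolding SF_def by auto
qed



definition tokT :: "nat \<Rightarrow> nat list" where
  "tokT i = [[0,1,0],[1,0,1],[0,2,1],[1,2,0]] ! i"

lemma tokT_vals: "tokT 0 = [0,1,0]" "tokT 1 = [1,0,1]" "tokT 2 = [0,2,1]" "tokT 3 = [1,2,0]"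
  by (simp_all add: tokT_def numeral_eq_Suc)

lemma sq3: "square_free [a::nat,b,c] \<longleftrightarrow> a \<noteq> b \<and> b \<noteq> c"
  unfolding sq_free_iff by (simp add: upt_rec)

lemma good_T3: "t \<in> Tset \<Longrightarrow> good t \<and> isT t \<and> set t \<subseteq> {0,1,2} \<and> length t = 3"
  unfolding Tset_def good_def isT_def by (auto simp: sq3)

lemma tokT_in: "i < 4 \<Longrightarrow> tokT i \<in> Tset"
proof -
  assume "i < 4"
  then have "i = 0 \<or> i = 1 \<or> i = 2 \<or> i = 3" by auto
  then show ?thesis unfolding Tset_def using tokT_vals by auto
qed

lemma tokT_props: "i < 4 \<Longrightarrow> good (tokT i) \<and> isT (tokT i) \<and> set (tokT i) \<subseteq> {0,1,2} \<and> length (tokT i) = 3"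
  using tokT_in good_T3 by blast

lemma tokT_inj: "inj_on tokT {0..<4}"
proof (rule inj_onI)
  fix i j assume "i \<in> {0..<4::nat}" "j \<in> {0..<4::nat}" "tokT i = tokT j"
  moreover have "\<And>k. k \<in> {0..<4::nat} \<Longrightarrow> k = 0 \<or> k = 1 \<or> k = 2 \<or> k = 3" by auto
  ultimately have "(i = 0 \<or> i = 1 \<or> i = 2 \<or> i = 3) \<and> (j = 0 \<or> j = 1 \<or> j = 2 \<or> j = 3)" "tokT i = tokT j"
    by auto
  then show "i = j" using tokT_vals by (elim conjE disjE) simp_all
qed

lemma sqf_map_inj:
  assumes "square_free s" "inj_on h (set s)"
  shows "square_free (map h s)"
  unfolding square_free_def
proof
  assume "\<exists>u x v. x \<noteq> [] \<and> map h s = u @ x @ x @ v"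
  then obtain u x v where x: "x \<noteq> []" "map h s = u @ x @ x @ v" by blast
  obtain s1 r1 where 1: "s = s1 @ r1" "map h r1 = x @ x @ v"
    using x(2) map_eq_append_conv[of h s u "x @ x @ v"] by auto
  obtain s2 r2 where 2: "r1 = s2 @ r2" "map h s2 = x" "map h r2 = x @ v"
    using 1(2) map_eq_append_conv[of h r1 x "x @ v"] by auto
  obtain s3 s4 where 3: "r2 = s3 @ s4" "map h s3 = x"
    using 2(3) map_eq_append_conv[of h r2 x v] by auto
  have s: "s = s1 @ s2 @ s3 @ s4" "map h s2 = x" "map h s3 = x" using 1 2 3 by auto
  have "set s2 \<union> set s3 \<subseteq> set s" using s(1) by auto
  then have "inj_on h (set s2 \<union> set s3)" using assms(2) by (rule inj_on_subset[rotated])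
  then have "s2 = s3" using s(2,3) inj_on_map_eq_map[of h s2 s3] by simp
  then show False using assms(1) s x(1) unfolding square_free_def by auto
qed

fun tk :: "nat list list \<Rightarrow> nat list list \<Rightarrow> nat list list" where
  "tk (V # Vs) (T # Ts) = V # T # tk Vs Ts"
| "tk _ _ = []"

lemma tk_set: "length Vs = length Ts \<Longrightarrow> set (tk Vs Ts) = set Vs \<union> set Ts"
  by (induction Vs Ts rule: tk.induct) auto

lemma tk_filter: "length Vs = length Ts \<Longrightarrow> \<forall>V\<in>set Vs. \<not> isT V \<Longrightarrow> \<forall>T\<in>set Ts. isT T \<Longrightarrow>
  filter isT (tk Vs Ts) = Ts"
  by (induction Vs Ts rule: tk.induct) auto

lemma tk_alt: "length Vs = length Ts \<Longrightarrow> \<forall>V\<in>set Vs. \<not> isT V \<Longrightarrow> \<forall>T\<in>set Ts. isT T \<Longrightarrow>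
  altp (tk Vs Ts) \<and> (\<forall>T. isT T \<longrightarrow> altp (T # tk Vs Ts))"
proof (induction Vs Ts rule: tk.induct)
  case (1 V Vs T Ts)
  then have IH: "altp (tk Vs Ts) \<and> (\<forall>T. isT T \<longrightarrow> altp (T # tk Vs Ts))" by auto
  have a1: "altp (V # T # tk Vs Ts)" using 1(3,4) IH by simp
  show ?case
  proof
    show "altp (tk (V # Vs) (T # Ts))" using a1 by simp
    show "\<forall>T'. isT T' \<longrightarrow> altp (T' # tk (V # Vs) (T # Ts))" using a1 1(3) by simp
  qed
qed auto

lemma tk_inj: "length Vs1 = length Ts \<Longrightarrow> length Vs2 = length Ts \<Longrightarrow> tk Vs1 Ts = tk Vs2 Ts \<Longrightarrow> Vs1 = Vs2"
proof (induction Vs1 Ts arbitrary: Vs2 rule: tk.induct)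
  case (1 V Vs T Ts)
  then obtain V2 Vs2' where "Vs2 = V2 # Vs2'" by (cases Vs2) auto
  then show ?case using 1 by auto
qed auto

lemma tk_len: "length Vs = length Ts \<Longrightarrow>
  length (concat (map sep (tk Vs Ts))) = sum_list (map (\<lambda>V. length V + 1) Vs) + sum_list (map (\<lambda>T. length T + 1) Ts)"
  by (induction Vs Ts rule: tk.induct) auto

lemma concat_sep_inj: "yfree a \<Longrightarrow> yfree b \<Longrightarrow> concat (map sep a) = concat (map sep b) \<Longrightarrow> a = b"
proof (induction a arbitrary: b)
  case Nil then show ?case by (cases b) auto
next
  case (Cons t a)
  then obtain g b' where b: "b = g # b'" by (cases b) auto
  have "3 \<notin> set t" "3 \<notin> set g" "yfree a" "yfree b'" using Cons.prems b unfolding yfree_def by auto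
  moreover have "t @ 3 # concat (map sep a) = g @ 3 # concat (map sep b')" using Cons.prems(3) b by simp
  ultimately show ?case using L_sep Cons.IH b by metis
qed

lemma reach: "list_all2 (\<lambda>a b. square_reduction\<^sup>*\<^sup>* a b) Vs Vs' \<Longrightarrow> length Vs = length Ts \<Longrightarrow>
  square_reduction\<^sup>*\<^sup>* (concat (map sep (tk Vs Ts))) (concat (map sep (tk Vs' Ts)))"
proof (induction Vs Vs' arbitrary: Ts rule: list_all2_induct)
  case Nil then show ?case by simp
next
  case (Cons V Vs V' Vs')
  then obtain T Ts' where Ts: "Ts = T # Ts'" by (cases Ts) auto
  define R where "R = concat (map sep (tk Vs Ts'))"
  define R' where "R' = concat (map sep (tk Vs' Ts'))"
  have IH: "square_reduction\<^sup>*\<^sup>* R R'" using Cons.IH Cons.prems Ts unfolding R_def R'_def by simp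
  have s1: "square_reduction\<^sup>*\<^sup>* ([] @ V @ (3 # T @ 3 # R)) ([] @ V' @ (3 # T @ 3 # R))"
    by (rule sr_cong[OF Cons.hyps(1)])
  have s2: "square_reduction\<^sup>*\<^sup>* ((V' @ 3 # T @ [3]) @ R @ []) ((V' @ 3 # T @ [3]) @ R' @ [])"
    by (rule sr_cong[OF IH])
  have "square_reduction\<^sup>*\<^sup>* (V @ 3 # T @ 3 # R) (V' @ 3 # T @ 3 # R')"
    using s1 s2 by simp
  then show ?case using Ts unfolding R_def R'_def by simp
qed

lemma set_concat_sep: "set (concat (map sep ts)) \<subseteq> insert 3 (\<Union>t\<in>set ts. set t)"
  by (induction ts) auto

lemma constr:
  fixes U :: "nat list" and Pv :: "nat list list"
  assumes U: "set U \<subseteq> {0, 1, 2}" "U \<noteq> []" "hd U = 2" "last U = 2"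
    and Pv: "\<forall>Z\<in>set Pv. good Z \<and> hd Z = 2 \<and> set Z \<subseteq> {0,1,2}"
  shows "\<exists>W::nat list. length W = m * (length U + 5) + sum_list (map (\<lambda>Z. length Z + 5) Pv) \<and>
     set W \<subseteq> {0..<4} \<and> r U ^ m \<le> r W"
proof -
  obtain s :: "nat list" where s: "set s \<subseteq> {0..<4}" "length s = m + length Pv" "square_free s"
    using SF_nonempty by blast
  define Ts where "Ts = map tokT s"
  have Tsp: "\<forall>T\<in>set Ts. good T \<and> isT T \<and> set T \<subseteq> {0,1,2} \<and> length T = 3"
  proof
    fix T assume "T \<in> set Ts"
    then obtain i where i: "i \<in> set s" "T = tokT i" unfolding Ts_def by auto
    then have "i < 4" using s(1) by auto
    then show "good T \<and> isT T \<and> set T \<subseteq> {0,1,2} \<and> length T = 3" using tokT_props i(2) by blast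
  qed
  have lTs: "length Ts = m + length Pv" unfolding Ts_def using s by simp
  have sfTs: "square_free Ts" unfolding Ts_def
    using sqf_map_inj[OF s(3)] inj_on_subset[OF tokT_inj s(1)] by blast
  define phi :: "nat list list \<Rightarrow> nat list" where "phi Ws = concat (map sep (tk (Ws @ Pv) Ts))" for Ws
  define W where "W = phi (replicate m U)"
  define Rm where "Rm = {Ws. set Ws \<subseteq> reducts U \<and> length Ws = m}"
  have cRm: "card Rm = r U ^ m"
    unfolding Rm_def r_def by (rule card_lists_length_eq[OF reducts_finite[of U]])
  have redU: "w \<in> reducts U \<Longrightarrow> good w \<and> hd w = 2 \<and> set w \<subseteq> {0,1,2}" for w
  proof -
    assume "w \<in> reducts U"
    then have w: "square_reduction\<^sup>*\<^sup>* U w" "square_free w" unfolding reducts_def by auto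
    from sr_props[OF w(1) U(2)] have "w \<noteq> [] \<and> hd w = 2 \<and> last w = 2 \<and> set w \<subseteq> {0,1,2}"
      using U by auto
    then show ?thesis using w(2) unfolding good_def by auto
  qed
  have Vgood: "Ws \<in> Rm \<Longrightarrow> \<forall>V\<in>set (Ws @ Pv). good V \<and> \<not> isT V \<and> set V \<subseteq> {0,1,2}" for Ws
    unfolding Rm_def isT_def using redU Pv by auto
  have lV: "Ws \<in> Rm \<Longrightarrow> length (Ws @ Pv) = length Ts" for Ws unfolding Rm_def using lTs by simp
  have yf: "Ws \<in> Rm \<Longrightarrow> yfree (tk (Ws @ Pv) Ts)" for Ws
    using tk_set[OF lV] Vgood Tsp unfolding yfree_def good_def by blast
  have inj: "inj_on phi Rm"
  proof (rule inj_onI)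
    fix W1 W2 assume a: "W1 \<in> Rm" "W2 \<in> Rm" "phi W1 = phi W2"
    then have "tk (W1 @ Pv) Ts = tk (W2 @ Pv) Ts" unfolding phi_def using concat_sep_inj yf by blast
    then have "W1 @ Pv = W2 @ Pv" using tk_inj lV a by blast
    then show "W1 = W2" by simp
  qed
  have img: "phi ` Rm \<subseteq> reducts W"
  proof
    fix x assume "x \<in> phi ` Rm"
    then obtain Ws where Ws: "Ws \<in> Rm" "x = phi Ws" by blast
    have aw: "\<forall>w\<in>set Ws. square_reduction\<^sup>*\<^sup>* U w" using Ws(1) unfolding Rm_def reducts_def by auto
    have "list_all2 (\<lambda>a b. square_reduction\<^sup>*\<^sup>* a b) (replicate m U) Ws"
      unfolding list_all2_conv_all_nth
    proof (intro conjI allI impI)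
      show "length (replicate m U) = length Ws" using Ws(1) unfolding Rm_def by simp
      fix i assume "i < length (replicate m U)"
      then show "square_reduction\<^sup>*\<^sup>* (replicate m U ! i) (Ws ! i)"
        using aw Ws(1) unfolding Rm_def by simp
    qed
    moreover have "list_all2 (\<lambda>a b. square_reduction\<^sup>*\<^sup>* a b) Pv Pv"
      by (simp add: list_all2_conv_all_nth)
    ultimately have la: "list_all2 (\<lambda>a b. square_reduction\<^sup>*\<^sup>* a b) (replicate m U @ Pv) (Ws @ Pv)"
      by (rule list_all2_appendI)
    have "length (replicate m U @ Pv) = length Ts" using lTs by simp
    from reach[OF la this] have rr: "square_reduction\<^sup>*\<^sup>* W x" unfolding W_def phi_def Ws(2) by simp
    have gd: "\<forall>t\<in>set (tk (Ws @ Pv) Ts). good t" using tk_set[OF lV[OF Ws(1)]] Vgood[OF Ws(1)] Tsp by auto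
    have al: "altp (tk (Ws @ Pv) Ts)" using tk_alt[OF lV[OF Ws(1)]] Vgood[OF Ws(1)] Tsp by auto
    have fl: "filter isT (tk (Ws @ Pv) Ts) = Ts" using tk_filter[OF lV[OF Ws(1)]] Vgood[OF Ws(1)] Tsp by auto
    have "square_free x" unfolding Ws(2) phi_def using SF[OF gd al] fl sfTs by simp
    then show "x \<in> reducts W" using rr unfolding reducts_def by simp
  qed
  have "r U ^ m \<le> r W"
  proof -
    have "r U ^ m = card (phi ` Rm)" using cRm card_image[OF inj] by simp
    also have "\<dots> \<le> card (reducts W)" using img reducts_finite by (rule card_mono[rotated])
    finally show ?thesis unfolding r_def .
  qed
  moreover have "length W = m * (length U + 5) + sum_list (map (\<lambda>Z. length Z + 5) Pv)"
  proof -
    have l0: "length (replicate m U @ Pv) = length Ts" using lTs by simp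
    have "sum_list (map (\<lambda>T. length T + 1) Ts) = 4 * length Ts"
      using Tsp by (induction Ts) auto
    moreover have "sum_list (map (\<lambda>Z. length Z + 5) Pv) = sum_list (map (\<lambda>V. length V + 1) Pv) + 4 * length Pv"
      by (induction Pv) auto
    ultimately show ?thesis unfolding W_def phi_def using tk_len[OF l0] lTs
      by (simp add: sum_list_replicate algebra_simps)
  qed
  moreover have "set W \<subseteq> {0..<4}"
  proof -
    have "Rm \<noteq> {} \<longrightarrow> True" by simp
    have tks: "set (tk (replicate m U @ Pv) Ts) = set (replicate m U @ Pv) \<union> set Ts"
      using tk_set lTs by simp
    have "\<forall>t\<in>set (tk (replicate m U @ Pv) Ts). set t \<subseteq> {0,1,2}"
      unfolding tks using U(1) Pv Tsp by auto
    then show ?thesis unfolding W_def phi_def using set_concat_sep by fastforce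
  qed
  ultimately show ?thesis by (intro exI[of _ W]) simp
qed



lemma sqZ10: "square_free [2::nat,0,1,0,2]"
  by (simp add: sq_free_iff upt_rec)

lemma sqZ11: "square_free [2::nat,0,1,2,0,2]"
  by (simp add: sq_free_iff upt_rec)

lemma pad_good: "Z \<in> {[2,0,1,0,2], [2,0,1,2,0,2]} \<Longrightarrow> good Z \<and> hd Z = 2 \<and> set Z \<subseteq> {0,1,2}"
proof -
  assume "Z \<in> {[2,0,1,0,2], [2,0,1,2,0,2]}"
  then have "Z = [2,0,1,0,2] \<or> Z = [2,0,1,2,0,2]" by simp
  then show ?thesis
  proof
    assume "Z = [2,0,1,0,2]" then show ?thesis using sqZ10 unfolding good_def by simp
  next
    assume "Z = [2,0,1,2,0,2]" then show ?thesis using sqZ11 unfolding good_def by simp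
  qed
qed

lemma fbound:
  fixes U :: "nat list"
  assumes U: "set U \<subseteq> {0, 1, 2}" "U \<noteq> []" "hd U = 2" "last U = 2"
  shows "r U ^ (n div (length U + 5) - 18) \<le> f 4 n"
proof (cases "n div (length U + 5) \<ge> 18")
  case False
  then have "r U ^ (n div (length U + 5) - 18) = 1" by simp
  also have "1 \<le> r (replicate n (0::nat))" by (rule r_pos)
  also have "\<dots> \<le> f 4 n" by (rule f_ge) auto
  finally show ?thesis .
next
  case True
  define B where "B = length U + 5"
  define m where "m = n div B - 18"
  define t where "t = n - m * B"
  have m18: "m + 18 = n div B" using True unfolding m_def B_def by simp
  have "(n div B) * B \<le> n" by (rule div_times_less_eq_dividend)
  then have mB: "m * B + 18 * B \<le> n" using m18 by (metis add_mult_distrib)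
  have "18 * B \<ge> 108" unfolding B_def using U(2) by (simp add: Suc_le_eq)
  then have tge: "t \<ge> 108" unfolding t_def using mB by linarith
  have nt: "n = m * B + t" unfolding t_def using mB by simp
  define b where "b = t mod 10"
  define a where "a = t div 10 - b"
  have b9: "b < 10" unfolding b_def by simp
  have "t div 10 \<ge> 10" using tge by simp
  moreover have "t mod 10 < 10" by simp
  moreover have "10 * (t div 10) + t mod 10 = t" by simp
  ultimately have ab: "10 * a + 11 * b = t" unfolding a_def b_def by linarith
  define Pv :: "nat list list" where "Pv = replicate a [2,0,1,0,2] @ replicate b [2,0,1,2,0,2]"
  have Pvg: "\<forall>Z\<in>set Pv. good Z \<and> hd Z = 2 \<and> set Z \<subseteq> {0,1,2}"
    unfolding Pv_def using pad_good by auto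
  have sPv: "sum_list (map (\<lambda>Z. length Z + 5) Pv) = t"
    unfolding Pv_def using ab by (simp add: sum_list_replicate)
  obtain W :: "nat list" where W: "length W = m * (length U + 5) + sum_list (map (\<lambda>Z. length Z + 5) Pv)"
    "set W \<subseteq> {0..<4}" "r U ^ m \<le> r W"
    using constr[OF U Pvg, of m] by blast
  have "length W = n" using W(1) sPv nt unfolding B_def by simp
  then have "r W \<le> f 4 n" using W(2) by (rule f_ge)
  then show ?thesis using W(3) unfolding m_def B_def by simp
qed

theorem theorem2p9:
  fixes U :: "nat list"
  assumes "set U \<subseteq> {0, 1, 2}"
    and "U \<noteq> []" and "hd U = 2" and "last U = 2"
  shows "\<exists>c > 0. \<forall>n. real (f 4 n) \<ge>
           c * (real (r U) powr (1 / (real (length U) + 5))) ^ n"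
proof -
  define x where "x = real (r U)"
  define B where "B = length U + 5"
  have x1: "x \<ge> 1" unfolding x_def using r_pos[of U] by simp
  have Bpos: "real B > 0" unfolding B_def by simp
  have RB: "real (length U) + 5 = real B" unfolding B_def by simp
  show ?thesis
  proof (rule exI[of _ "x powr (-19)"], intro conjI allI)
    show "x powr (-19) > 0" using x1 by simp
    fix n
    have "(x powr (1 / real B)) ^ n = x powr (real n * (1 / real B))"
      using x1 by (intro powr_power) simp
    then have "x powr (-19) * (x powr (1 / real B)) ^ n = x powr (real n / real B - 19)"
      by (simp add: powr_add[symmetric])
    also have "\<dots> \<le> x powr real (n div B - 18)"
    proof (rule powr_mono[OF _ x1])
      have "real n = real (n div B) * real B + real (n mod B)"
        by (metis div_mult_mod_eq of_nat_add of_nat_mult)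
      moreover have "real (n mod B) < real B" using Bpos by simp
      ultimately have "real n / real B < real (n div B) + 1"
        using Bpos by (simp add: field_simps)
      moreover have "real (n div B) - 18 \<le> real (n div B - 18)" by simp
      ultimately show "real n / real B - 19 \<le> real (n div B - 18)" by linarith
    qed
    also have "\<dots> = x ^ (n div B - 18)" using x1 by (intro powr_realpow) simp
    also have "\<dots> \<le> real (f 4 n)"
      using fbound[OF assms, of n] unfolding x_def B_def by (metis of_nat_le_iff of_nat_power)
    finally show "real (f 4 n) \<ge> x powr (-19) * (real (r U) powr (1 / (real (length U) + 5))) ^ n"
      unfolding RB x_def .
  qed
qed

end
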